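(* Assume the setting and hypotheses (A1)–(A4) of the context, with $\gamma,\lambda>0$, $\beta\in(0,1)$, $c_1\in(0,1/2)$, and let $\{z^k=(u^k,v^k,C^k)\}$ be generated by the inexact block coordinate descent scheme described in the context. Then there exists a constant $w_1>0$ such that for all $k$, $$E_\lambda(z^k)-E_\lambda(z^{k+1})\ge w_1\|z^{k+1}-z^k\|^2.$$
   Context: Let $n\ge1$, $\hat X\in\mathbb{R}^{n\times n}$ an observed transport plan (nonnegative, with row sums $\mu$ and column sums $\nu$, $\mu,\nu$ probability vectors), $\psi:\mathbb{R}\to(-\infty,+\infty]$ convex with $\psi(Z):=\sum_{i,j}\psi(Z_{ij})$ for matrices, $(u\oplus v)_{ij}:=u_i+v_j$, $E(u,v,C):=\psi\big((u\oplus v-C)/\gamma\big)-\big\langle(u\oplus v-C)/\gamma,\hat X\big\rangle$ and $E_\lambda(u,v,C):=E(u,v,C)+\lambda(R_1(u)+R_2(v)+R_3(C))$. Hypotheses: (A1) $\psi$ is of Legendre type and $C^2$ on $\operatorname{int}(\operatorname{dom}\psi)$; (A2) for every generated iterate, $\hat X_{ij}$ and $(u^k_i+v^k_j-C^k_{ij})/\gamma$ lie in $\operatorname{int}(\operatorname{dom}\psi)$ for all $i,j$; (A3) $R_1,R_2:\mathbb{R}^n\to\mathbb{R}$, $R_3:\mathbb{R}^{n\times n}\to\mathbb{R}$ are continuously differentiable and strongly convex with moduli $\sigma_1,\sigma_2,\sigma_3>0$; (A4) $\mathcal{C}\subseteq\mathbb{R}^{n\times n}$ is nonempty, closed, convex,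 with Euclidean projection $P_{\mathcal{C}}$. The scheme, from $z^0\in\mathbb{R}^n\times\mathbb{R}^n\times\mathcal{C}$: at iteration $k$, (u-block) with $g_u=\nabla_uE_\lambda(u^k,v^k,C^k)$, $H_u=\nabla^2_{uu}E_\lambda(u^k,v^k,C^k)$, $d_u=-H_u^{-1}g_u$, let $\alpha^u_k$ be the first $\alpha\in\{1,\beta,\beta^2,\dots\}$ with $E_\lambda(u^k+\alpha d_u,v^k,C^k)\le E_\lambda(u^k,v^k,C^k)+c_1\alpha g_u^\top d_u$, and set $u^{k+1}=u^k+\alpha_k^ud_u$; (v-block) the same with $v$ in place of $u$ at the point $(u^{k+1},v^k,C^k)$, giving $v^{k+1}=v^k+\alpha_k^vd_v$; (C-block) with $g_C=\nabla_CE_\lambda(u^{k+1},v^{k+1},C^k)$ and $C(\alpha):=P_{\mathcal{C}}(C^k-\alpha g_C)$, let $\alpha^C_k$ be the first $\alpha\in\{1,\beta,\beta^2,\dots\}$ with $E_\lambda(u^{k+1},v^{k+1},C(\alpha))\le E_\lambda(u^{k+1},v^{k+1},C^k)+c_1\langle g_C,C(\alpha)-C^k\rangle$, and set $C^{k+1}=C(\alpha^C_k)$. *)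

theory Defs
  imports "HOL-Analysis.Analysis"
begin

(* Vectors in R^n are real^'n, n x n matrices are real^'n^'n (Frobenius inner product/norm). *)

definition strictly_convex_on :: "real set \<Rightarrow> (real \<Rightarrow> real) \<Rightarrow> bool" where
  "strictly_convex_on S f \<longleftrightarrow>
     (\<forall>x\<in>S. \<forall>y\<in>S. \<forall>t. x \<noteq> y \<and> 0 < t \<and> t < 1 \<longrightarrow>
        f (t * x + (1 - t) * y) < t * f x + (1 - t) * f y)"

definition strongly_convex :: "('a::real_inner \<Rightarrow> real) \<Rightarrow> real \<Rightarrow> bool" where
  "strongly_convex f \<sigma> \<longleftrightarrow>
     (\<forall>x y t. 0 \<le> t \<and> t \<le> 1 \<longrightarrow>
        f (t *\<^sub>R x + (1 - t) *\<^sub>R y)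
          \<le> t * f x + (1 - t) * f y - \<sigma> / 2 * t * (1 - t) * (norm (x - y))\<^sup>2)"

definition C1_grad :: "('a::real_inner \<Rightarrow> real) \<Rightarrow> bool" where
  "C1_grad f \<longleftrightarrow> (\<exists>g. (\<forall>x. (f has_derivative (\<lambda>h. g x \<bullet> h)) (at x)) \<and> continuous_on UNIV g)"

definition edom :: "(real \<Rightarrow> ereal) \<Rightarrow> real set" where
  "edom f = {x. f x \<noteq> \<infinity>}"

definition rval :: "(real \<Rightarrow> ereal) \<Rightarrow> real \<Rightarrow> real" where
  "rval f x = real_of_ereal (f x)"

text \<open>Legendre type (Rockafellar, Sect. 26): f closed proper convex, essentially smooth
  (int dom f nonempty, f differentiable on int dom f, |f'(x_k)| \<rightarrow> \<infinity> whenever x_k in int dom f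
  tends to a boundary point of int dom f), and strictly convex on int dom f.\<close>
definition legendre_type :: "(real \<Rightarrow> ereal) \<Rightarrow> bool" where
  "legendre_type f \<longleftrightarrow>
     (\<forall>x. f x \<noteq> -\<infinity>) \<and> edom f \<noteq> {} \<and>
     (\<forall>x y t. 0 < t \<and> t < 1 \<longrightarrow> f (t * x + (1 - t) * y) \<le> ereal t * f x + ereal (1 - t) * f y) \<and>
     (\<forall>x. f x \<le> Liminf (at x) f) \<and>
     interior (edom f) \<noteq> {} \<and>
     (\<forall>x\<in>interior (edom f). rval f differentiable (at x)) \<and>
     strictly_convex_on (interior (edom f)) (rval f) \<and>
     (\<forall>s x. (\<forall>k. s k \<in> interior (edom f)) \<and> s \<longlonglongrightarrow> x \<and> x \<in> frontier (interior (edom f)) \<longrightarrow>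
        filterlim (\<lambda>k. \<bar>deriv (rval f) (s k)\<bar>) at_top sequentially)"

definition C2_on :: "real set \<Rightarrow> (real \<Rightarrow> real) \<Rightarrow> bool" where
  "C2_on D f \<longleftrightarrow> (\<exists>f1 f2. (\<forall>x\<in>D. (f has_real_derivative f1 x) (at x) \<and>
                                   (f1 has_real_derivative f2 x) (at x)) \<and> continuous_on D f2)"

definition oplus :: "real^'n \<Rightarrow> real^'n \<Rightarrow> real^'n^'n" where
  "oplus u v = (\<chi> i j. u $ i + v $ j)"

definition psiM :: "(real \<Rightarrow> ereal) \<Rightarrow> real^'n^'n \<Rightarrow> ereal" where
  "psiM \<psi> Z = (\<Sum>i\<in>UNIV. \<Sum>j\<in>UNIV. \<psi> (Z $ i $ j))"

definition Eobj :: "(real \<Rightarrow> ereal) \<Rightarrow> real \<Rightarrow> real^'n^'n \<Rightarrow> real^'n \<Rightarrow> real^'n \<Rightarrow> real^'n^'n \<Rightarrow> ereal" where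
  "Eobj \<psi> \<gamma> Xh u v C =
     psiM \<psi> ((1 / \<gamma>) *\<^sub>R (oplus u v - C)) - ereal (((1 / \<gamma>) *\<^sub>R (oplus u v - C)) \<bullet> Xh)"

definition Elam :: "(real \<Rightarrow> ereal) \<Rightarrow> real \<Rightarrow> real^'n^'n \<Rightarrow> real
                    \<Rightarrow> (real^'n \<Rightarrow> real) \<Rightarrow> (real^'n \<Rightarrow> real) \<Rightarrow> (real^'n^'n \<Rightarrow> real)
                    \<Rightarrow> real^'n \<Rightarrow> real^'n \<Rightarrow> real^'n^'n \<Rightarrow> ereal" where
  "Elam \<psi> \<gamma> Xh lam R1 R2 R3 u v C = Eobj \<psi> \<gamma> Xh u v C + ereal (lam * (R1 u + R2 v + R3 C))"

text \<open>Damped Newton step with Armijo backtracking for a block function F :: real^'n \<Rightarrow> ereal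
  at the point x, producing x'. g is the gradient of F at x, H its Hessian (the derivative of
  the gradient map G at x, which exists on a neighbourhood of x), d = -H^{-1} g, and the
  step length is the first beta^m (m = 0,1,2,...) satisfying the Armijo condition.\<close>
definition newton_block :: "(real^'n \<Rightarrow> ereal) \<Rightarrow> real \<Rightarrow> real \<Rightarrow> real^'n \<Rightarrow> real^'n \<Rightarrow> bool" where
  "newton_block F \<beta> c1 x x' \<longleftrightarrow>
     (\<exists>G H. eventually (\<lambda>y. ((\<lambda>y. real_of_ereal (F y)) has_derivative (\<lambda>h. G y \<bullet> h)) (at y)) (nhds x) \<and>
            (G has_derivative (\<lambda>h. H *v h)) (at x) \<and>
            (let g = G x; d = - (matrix_inv H *v g);
                 armijo = (\<lambda>m::nat. F (x + (\<beta> ^ m) *\<^sub>R d) \<le> F x + ereal (c1 * \<beta> ^ m * (g \<bullet> d)))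
             in \<exists>m. armijo m \<and> (\<forall>j<m. \<not> armijo j) \<and> x' = x + (\<beta> ^ m) *\<^sub>R d))"

definition proj_block :: "(real^'n^'n) set \<Rightarrow> (real^'n^'n \<Rightarrow> ereal) \<Rightarrow> real \<Rightarrow> real
                          \<Rightarrow> real^'n^'n \<Rightarrow> real^'n^'n \<Rightarrow> bool" where
  "proj_block S F \<beta> c1 x x' \<longleftrightarrow>
     (\<exists>g. ((\<lambda>y. real_of_ereal (F y)) has_derivative (\<lambda>h. g \<bullet> h)) (at x) \<and>
          (let P = (\<lambda>m::nat. closest_point S (x - (\<beta> ^ m) *\<^sub>R g));
               armijo = (\<lambda>m. F (P m) \<le> F x + ereal (c1 * (g \<bullet> (P m - x))))
           in \<exists>m. armijo m \<and> (\<forall>j<m. \<not> armijo j) \<and> x' = P m))"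

end

theory Submission
  imports Defs
begin

definition rconv :: "('a::real_vector \<Rightarrow> ereal) \<Rightarrow> bool" where
  "rconv \<Phi> \<longleftrightarrow> (\<forall>x y t. 0 < t \<and> t < 1 \<and> \<Phi> x \<noteq> \<infinity> \<and> \<Phi> x \<noteq> -\<infinity> \<and> \<Phi> y \<noteq> \<infinity> \<and> \<Phi> y \<noteq> -\<infinity> \<longrightarrow>
     \<Phi> (t *\<^sub>R y + (1 - t) *\<^sub>R x) \<noteq> \<infinity> \<and> \<Phi> (t *\<^sub>R y + (1 - t) *\<^sub>R x) \<noteq> -\<infinity> \<and>
     real_of_ereal (\<Phi> (t *\<^sub>R y + (1 - t) *\<^sub>R x)) \<le> t * real_of_ereal (\<Phi> y) + (1 - t) * real_of_ereal (\<Phi> x))"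

lemma key:
  fixes \<Phi> :: "'a::real_inner \<Rightarrow> ereal" and \<rho> :: "'a \<Rightarrow> real"
  assumes rc: "rconv \<Phi>" and sc: "strongly_convex \<rho> \<sigma>"
    and fx: "\<Phi> x \<noteq> \<infinity>" "\<Phi> x \<noteq> -\<infinity>" and fy: "\<Phi> y \<noteq> \<infinity>" "\<Phi> y \<noteq> -\<infinity>"
    and der: "((\<lambda>z. real_of_ereal (\<Phi> z + ereal (\<rho> z))) has_derivative (\<lambda>h. g \<bullet> h)) (at x)"
  shows "real_of_ereal (\<Phi> x) + \<rho> x + g \<bullet> (y - x) + \<sigma>/2 * (norm (y - x))^2
          \<le> real_of_ereal (\<Phi> y) + \<rho> y"
proof -
  define D where "D = y - x"
  define f where "f = (\<lambda>s::real. real_of_ereal (\<Phi> (x + s *\<^sub>R D) + ereal (\<rho> (x + s *\<^sub>R D))))"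
  define A where "A = (real_of_ereal (\<Phi> y) + \<rho> y) - (real_of_ereal (\<Phi> x) + \<rho> x)"
  have inner: "((\<lambda>s::real. x + s *\<^sub>R D) has_derivative (\<lambda>s. s *\<^sub>R D)) (at 0)"
    by (auto intro!: derivative_eq_intros)
  have der': "((\<lambda>z. real_of_ereal (\<Phi> z + ereal (\<rho> z))) has_derivative (\<lambda>h. g \<bullet> h)) (at (x + 0 *\<^sub>R D))"
    using der by simp
  have fd: "(f has_derivative ((\<lambda>h. g \<bullet> h) \<circ> (\<lambda>s. s *\<^sub>R D))) (at 0)"
    using diff_chain_at[OF inner der'] unfolding f_def o_def by simp
  have eqf: "((\<lambda>h. g \<bullet> h) \<circ> (\<lambda>s. s *\<^sub>R D)) = (*) (g \<bullet> D)"
    by (auto simp: o_def fun_eq_iff)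
  have "(f has_real_derivative (g \<bullet> D)) (at 0)"
    using fd unfolding eqf has_field_derivative_def by simp
  then have l1: "((\<lambda>s. (f s - f 0) / (s - 0)) \<longlongrightarrow> g \<bullet> D) (at 0)"
    using has_field_derivative_iff by blast
  have l2: "((\<lambda>s. (f s - f 0) / (s - 0)) \<longlongrightarrow> g \<bullet> D) (at_right 0)"
    using tendsto_mono[OF at_le[OF subset_UNIV] l1] by simp
  have l3: "((\<lambda>s. A - \<sigma>/2 * (1 - s) * (norm D)^2) \<longlongrightarrow> A - \<sigma>/2 * (1 - 0) * (norm D)^2) (at_right 0)"
    by (intro tendsto_intros)
  have bnd: "(f s - f 0) / (s - 0) \<le> A - \<sigma>/2 * (1 - s) * (norm D)^2" if s: "0 < s" "s < 1" for s
  proof -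
    have zeq: "x + s *\<^sub>R D = s *\<^sub>R y + (1 - s) *\<^sub>R x"
      unfolding D_def by (simp add: algebra_simps)
    have c: "\<Phi> (s *\<^sub>R y + (1 - s) *\<^sub>R x) \<noteq> \<infinity> \<and> \<Phi> (s *\<^sub>R y + (1 - s) *\<^sub>R x) \<noteq> -\<infinity> \<and>
     real_of_ereal (\<Phi> (s *\<^sub>R y + (1 - s) *\<^sub>R x)) \<le> s * real_of_ereal (\<Phi> y) + (1 - s) * real_of_ereal (\<Phi> x)"
      using rc s fx fy unfolding rconv_def by blast
    have r: "\<rho> (s *\<^sub>R y + (1 - s) *\<^sub>R x) \<le> s * \<rho> y + (1 - s) * \<rho> x - \<sigma> / 2 * s * (1 - s) * (norm (y - x))\<^sup>2"
      using sc s unfolding strongly_convex_def by auto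
    have fs: "f s = real_of_ereal (\<Phi> (s *\<^sub>R y + (1 - s) *\<^sub>R x)) + \<rho> (s *\<^sub>R y + (1 - s) *\<^sub>R x)"
      unfolding f_def zeq using c by (cases "\<Phi> (s *\<^sub>R y + (1 - s) *\<^sub>R x)") auto
    have f0: "f 0 = real_of_ereal (\<Phi> x) + \<rho> x"
      unfolding f_def using fx by (cases "\<Phi> x") auto
    have "f s - f 0 \<le> s * A - \<sigma> / 2 * s * (1 - s) * (norm D)\<^sup>2"
      using c r unfolding fs f0 A_def D_def by (simp add: algebra_simps)
    also have "\<dots> = s * (A - \<sigma>/2 * (1 - s) * (norm D)^2)" by (simp add: algebra_simps)
    finally show ?thesis using s by (simp add: pos_divide_le_eq mult.commute)
  qed
  have ev: "eventually (\<lambda>s. (f s - f 0) / (s - 0) \<le> A - \<sigma>/2 * (1 - s) * (norm D)^2) (at_right (0::real))"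
    unfolding eventually_at_right_field using bnd by (intro exI[of _ 1]) auto
  have "g \<bullet> D \<le> A - \<sigma>/2 * (1 - 0) * (norm D)^2"
    by (rule tendsto_le[OF _ l3 l2 ev]) simp
  then show ?thesis unfolding A_def D_def by simp
qed


lemma block:
  fixes \<Phi> :: "'a::real_inner \<Rightarrow> ereal" and \<rho> :: "'a \<Rightarrow> real" and F :: "'a \<Rightarrow> ereal"
  assumes rc: "rconv \<Phi>" and nm: "\<forall>z. \<Phi> z \<noteq> -\<infinity>" and sc: "strongly_convex \<rho> \<sigma>"
    and Fe: "\<forall>z. F z = \<Phi> z + ereal (\<rho> z)" and c1: "0 < c1" "c1 < 1"
    and fx: "\<Phi> x \<noteq> \<infinity>"
    and der: "((\<lambda>z. real_of_ereal (F z)) has_derivative (\<lambda>h. g \<bullet> h)) (at x)"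
    and arm: "F y \<le> F x + ereal (c1 * (g \<bullet> (y - x)))"
  shows "\<exists>a b. F x = ereal a \<and> F y = ereal b \<and> a - b \<ge> c1 * \<sigma> / (2 * (1 - c1)) * (norm (y - x))^2"
proof -
  have fx': "\<Phi> x \<noteq> -\<infinity>" using nm by auto
  obtain px where px: "\<Phi> x = ereal px" using fx fx' by (cases "\<Phi> x") auto
  have "F x + ereal (c1 * (g \<bullet> (y - x))) = ereal (px + \<rho> x + c1 * (g \<bullet> (y - x)))"
    using Fe px by simp
  then have "F y \<noteq> \<infinity>" using arm by auto
  then have fy: "\<Phi> y \<noteq> \<infinity>" using Fe by auto
  have fy': "\<Phi> y \<noteq> -\<infinity>" using nm by auto
  obtain py where py: "\<Phi> y = ereal py" using fy fy' by (cases "\<Phi> y") auto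
  have der': "((\<lambda>z. real_of_ereal (\<Phi> z + ereal (\<rho> z))) has_derivative (\<lambda>h. g \<bullet> h)) (at x)"
    using der Fe by simp
  have k: "px + \<rho> x + g \<bullet> (y - x) + \<sigma>/2 * (norm (y - x))^2 \<le> py + \<rho> y"
    using key[OF rc sc fx fx' fy fy' der'] px py by simp
  have a: "py + \<rho> y \<le> px + \<rho> x + c1 * (g \<bullet> (y - x))"
    using arm Fe px py by simp
  define s where "s = g \<bullet> (y - x)"
  define N where "N = (norm (y - x))^2"
  have "(1 - c1) * (- s) \<ge> \<sigma>/2 * N" using k a unfolding s_def N_def by (simp add: algebra_simps)
  then have "- s \<ge> \<sigma> / (2 * (1 - c1)) * N" using c1 by (simp add: field_simps)
  then have "c1 * (- s) \<ge> c1 * (\<sigma> / (2 * (1 - c1)) * N)" using c1 by (intro mult_left_mono) auto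
  then have "(px + \<rho> x) - (py + \<rho> y) \<ge> c1 * \<sigma> / (2 * (1 - c1)) * N" using a unfolding s_def by (simp add: algebra_simps)
  then show ?thesis using Fe px py unfolding N_def by (intro exI[of _ "px + \<rho> x"] exI[of _ "py + \<rho> y"]) simp
qed

lemma sc_scale:
  fixes R :: "'a::real_inner \<Rightarrow> real"
  assumes "strongly_convex R \<sigma>" "lam > 0" "\<forall>x. \<rho> x = lam * R x + c"
  shows "strongly_convex \<rho> (lam * \<sigma>)"
  unfolding strongly_convex_def
proof (intro allI impI)
  fix x y :: 'a and t :: real assume t: "0 \<le> t \<and> t \<le> 1"
  have "R (t *\<^sub>R x + (1 - t) *\<^sub>R y) \<le> t * R x + (1 - t) * R y - \<sigma> / 2 * t * (1 - t) * (norm (x - y))\<^sup>2"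
    using assms(1) t unfolding strongly_convex_def by blast
  then have "lam * R (t *\<^sub>R x + (1 - t) *\<^sub>R y) \<le> lam * (t * R x + (1 - t) * R y - \<sigma> / 2 * t * (1 - t) * (norm (x - y))\<^sup>2)"
    using assms(2) by (intro mult_left_mono) auto
  then show "\<rho> (t *\<^sub>R x + (1 - t) *\<^sub>R y) \<le> t * \<rho> x + (1 - t) * \<rho> y - lam * \<sigma> / 2 * t * (1 - t) * (norm (x - y))\<^sup>2"
    using assms(3) by (simp add: algebra_simps)
qed


lemma psiM_fin:
  assumes nm: "\<forall>x. \<psi> x \<noteq> -\<infinity>" and fin: "\<forall>i j. \<psi> (Z $ i $ j) \<noteq> \<infinity>"
  shows "psiM \<psi> Z = ereal (\<Sum>i\<in>UNIV. \<Sum>j\<in>UNIV. rval \<psi> (Z $ i $ j))"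
proof -
  have "\<And>i j. \<psi> (Z $ i $ j) = ereal (rval \<psi> (Z $ i $ j))"
    using nm fin unfolding rval_def by (case_tac "\<psi> (Z $ i $ j)") auto
  then show ?thesis unfolding psiM_def by simp
qed

lemma psiM_notinf:
  assumes "psiM \<psi> Z \<noteq> \<infinity>" shows "\<psi> (Z $ i $ j) \<noteq> \<infinity>"
proof
  assume a: "\<psi> (Z $ i $ j) = \<infinity>"
  have "(\<Sum>j\<in>UNIV. \<psi> (Z $ i $ j)) = \<infinity>" using a by (subst sum_Pinfty) auto
  then have "psiM \<psi> Z = \<infinity>" unfolding psiM_def by (subst sum_Pinfty) auto
  then show False using assms by simp
qed

lemma psiM_nm:
  assumes nm: "\<forall>x. \<psi> x \<noteq> -\<infinity>" shows "psiM \<psi> Z \<noteq> -\<infinity>"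
proof (cases "psiM \<psi> Z = \<infinity>")
  case False
  then have "\<forall>i j. \<psi> (Z $ i $ j) \<noteq> \<infinity>" using psiM_notinf by blast
  then have "psiM \<psi> Z = ereal (\<Sum>i\<in>UNIV. \<Sum>j\<in>UNIV. rval \<psi> (Z $ i $ j))"
    using psiM_fin[OF nm] by blast
  then show ?thesis by simp
qed simp

lemma psi_conv:
  assumes L: "legendre_type \<psi>" and a: "\<psi> a \<noteq> \<infinity>" and b: "\<psi> b \<noteq> \<infinity>" and t: "0 < t" "t < 1"
  shows "\<psi> (t * b + (1 - t) * a) \<noteq> \<infinity> \<and> rval \<psi> (t * b + (1 - t) * a) \<le> t * rval \<psi> b + (1 - t) * rval \<psi> a"
proof -
  have nm: "\<forall>x. \<psi> x \<noteq> -\<infinity>" using L unfolding legendre_type_def by blast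
  have c: "\<psi> (t * b + (1 - t) * a) \<le> ereal t * \<psi> b + ereal (1 - t) * \<psi> a"
    using L t unfolding legendre_type_def by blast
  obtain ra where ra: "\<psi> a = ereal ra" using a nm by (cases "\<psi> a") auto
  obtain rb where rb: "\<psi> b = ereal rb" using b nm by (cases "\<psi> b") auto
  have c': "\<psi> (t * b + (1 - t) * a) \<le> ereal (t * rb + (1 - t) * ra)" using c ra rb by simp
  then have "\<psi> (t * b + (1 - t) * a) \<noteq> \<infinity>" by auto
  moreover then obtain rc where rc: "\<psi> (t * b + (1 - t) * a) = ereal rc" using nm by (cases "\<psi> (t * b + (1 - t) * a)") auto
  ultimately show ?thesis using c' ra rb unfolding rval_def by simp
qed

definition Qf :: "(real \<Rightarrow> ereal) \<Rightarrow> real^'n^'n \<Rightarrow> real^'n^'n \<Rightarrow> ereal" where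
  "Qf \<psi> Xh Z = psiM \<psi> Z - ereal (Z \<bullet> Xh)"

lemma Qf_nm: "\<forall>x. \<psi> x \<noteq> -\<infinity> \<Longrightarrow> Qf \<psi> Xh Z \<noteq> -\<infinity>"
  unfolding Qf_def using psiM_nm[of \<psi> Z] by (cases "psiM \<psi> Z") auto

lemma Qf_conv:
  fixes Xh :: "real^'n^'n"
  assumes L: "legendre_type \<psi>"
  shows "rconv (Qf \<psi> Xh)"
  unfolding rconv_def
proof (intro allI impI)
  fix X Y :: "real^'n^'n" and t :: real
  assume h: "0 < t \<and> t < 1 \<and> Qf \<psi> Xh X \<noteq> \<infinity> \<and> Qf \<psi> Xh X \<noteq> - \<infinity> \<and> Qf \<psi> Xh Y \<noteq> \<infinity> \<and> Qf \<psi> Xh Y \<noteq> - \<infinity>"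
  have nm: "\<forall>x. \<psi> x \<noteq> -\<infinity>" using L unfolding legendre_type_def by blast
  have pX: "psiM \<psi> X \<noteq> \<infinity>" using h unfolding Qf_def by auto
  have pY: "psiM \<psi> Y \<noteq> \<infinity>" using h unfolding Qf_def by auto
  have fX: "\<forall>i j. \<psi> (X $ i $ j) \<noteq> \<infinity>" using psiM_notinf[OF pX] by blast
  have fY: "\<forall>i j. \<psi> (Y $ i $ j) \<noteq> \<infinity>" using psiM_notinf[OF pY] by blast
  define W where "W = t *\<^sub>R Y + (1 - t) *\<^sub>R X"
  have Wij: "W $ i $ j = t * Y $ i $ j + (1 - t) * X $ i $ j" for i j unfolding W_def by simp
  have cij: "\<psi> (W $ i $ j) \<noteq> \<infinity> \<and> rval \<psi> (W $ i $ j) \<le> t * rval \<psi> (Y $ i $ j) + (1 - t) * rval \<psi> (X $ i $ j)" for i j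
    unfolding Wij using psi_conv[OF L, of "X $ i $ j" "Y $ i $ j" t] fX fY h by blast
  have fW: "\<forall>i j. \<psi> (W $ i $ j) \<noteq> \<infinity>" using cij by blast
  have sW: "(\<Sum>i\<in>UNIV. \<Sum>j\<in>UNIV. rval \<psi> (W $ i $ j)) \<le>
      (\<Sum>i\<in>UNIV. \<Sum>j\<in>UNIV. t * rval \<psi> (Y $ i $ j) + (1 - t) * rval \<psi> (X $ i $ j))"
    using cij by (intro sum_mono) auto
  also have "\<dots> = t * (\<Sum>i\<in>UNIV. \<Sum>j\<in>UNIV. rval \<psi> (Y $ i $ j)) + (1 - t) * (\<Sum>i\<in>UNIV. \<Sum>j\<in>UNIV. rval \<psi> (X $ i $ j))"
    by (simp add: sum.distrib sum_distrib_left)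
  finally have sW': "(\<Sum>i\<in>UNIV. \<Sum>j\<in>UNIV. rval \<psi> (W $ i $ j)) \<le> \<dots>" .
  have lin: "W \<bullet> Xh = t * (Y \<bullet> Xh) + (1 - t) * (X \<bullet> Xh)" unfolding W_def by (simp add: inner_add_left)
  show "Qf \<psi> Xh W \<noteq> \<infinity> \<and> Qf \<psi> Xh W \<noteq> - \<infinity> \<and> real_of_ereal (Qf \<psi> Xh W) \<le> t * real_of_ereal (Qf \<psi> Xh Y) + (1 - t) * real_of_ereal (Qf \<psi> Xh X)"
    unfolding Qf_def psiM_fin[OF nm fW] psiM_fin[OF nm fX] psiM_fin[OF nm fY] lin
    using sW' by (simp add: ring_distribs)
qed

lemma rconv_comp:
  assumes "rconv Q" and "\<And>x y t. M (t *\<^sub>R y + (1 - t) *\<^sub>R x) = t *\<^sub>R M y + (1 - t) *\<^sub>R M x"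
  shows "rconv (\<lambda>x. Q (M x))"
  unfolding rconv_def
proof (intro allI impI)
  fix x y and t :: real assume h: "0 < t \<and> t < 1 \<and> Q (M x) \<noteq> \<infinity> \<and> Q (M x) \<noteq> - \<infinity> \<and> Q (M y) \<noteq> \<infinity> \<and> Q (M y) \<noteq> - \<infinity>"
  have "Q (t *\<^sub>R M y + (1 - t) *\<^sub>R M x) \<noteq> \<infinity> \<and> Q (t *\<^sub>R M y + (1 - t) *\<^sub>R M x) \<noteq> - \<infinity> \<and>
     real_of_ereal (Q (t *\<^sub>R M y + (1 - t) *\<^sub>R M x)) \<le> t * real_of_ereal (Q (M y)) + (1 - t) * real_of_ereal (Q (M x))"
    using assms(1) h unfolding rconv_def by blast
  then show "Q (M (t *\<^sub>R y + (1 - t) *\<^sub>R x)) \<noteq> \<infinity> \<and> Q (M (t *\<^sub>R y + (1 - t) *\<^sub>R x)) \<noteq> - \<infinity> \<and>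
     real_of_ereal (Q (M (t *\<^sub>R y + (1 - t) *\<^sub>R x))) \<le> t * real_of_ereal (Q (M y)) + (1 - t) * real_of_ereal (Q (M x))"
    unfolding assms(2) .
qed


lemma newton_unpack:
  assumes "newton_block F \<beta> c1 x x'"
  shows "\<exists>g. ((\<lambda>y. real_of_ereal (F y)) has_derivative (\<lambda>h. g \<bullet> h)) (at x) \<and>
             F x' \<le> F x + ereal (c1 * (g \<bullet> (x' - x)))"
proof -
  obtain G H where ev: "eventually (\<lambda>y. ((\<lambda>y. real_of_ereal (F y)) has_derivative (\<lambda>h. G y \<bullet> h)) (at y)) (nhds x)"
    and m: "\<exists>m. F (x + (\<beta> ^ m) *\<^sub>R (- (matrix_inv H *v G x))) \<le> F x + ereal (c1 * \<beta> ^ m * (G x \<bullet> (- (matrix_inv H *v G x))))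
             \<and> x' = x + (\<beta> ^ m) *\<^sub>R (- (matrix_inv H *v G x))"
    using assms unfolding newton_block_def Let_def by blast
  obtain m where m1: "F (x + (\<beta> ^ m) *\<^sub>R (- (matrix_inv H *v G x))) \<le> F x + ereal (c1 * \<beta> ^ m * (G x \<bullet> (- (matrix_inv H *v G x))))"
     and m2: "x' = x + (\<beta> ^ m) *\<^sub>R (- (matrix_inv H *v G x))" using m by blast
  have d: "((\<lambda>y. real_of_ereal (F y)) has_derivative (\<lambda>h. G x \<bullet> h)) (at x)"
    using eventually_nhds_x_imp_x[OF ev] .
  have "c1 * \<beta> ^ m * (G x \<bullet> (- (matrix_inv H *v G x))) = c1 * (G x \<bullet> (x' - x))"
    unfolding m2 by (simp add: inner_scaleR_right)
  then show ?thesis using d m1 m2 by (intro exI[of _ "G x"]) (simp add: mult.assoc)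
qed

lemma proj_unpack:
  assumes "proj_block S F \<beta> c1 x x'"
  shows "\<exists>g. ((\<lambda>y. real_of_ereal (F y)) has_derivative (\<lambda>h. g \<bullet> h)) (at x) \<and>
             F x' \<le> F x + ereal (c1 * (g \<bullet> (x' - x)))"
  using assms unfolding proj_block_def Let_def by blast

lemma Eobj_Qf: "Eobj \<psi> \<gamma> Xh u v C = Qf \<psi> Xh ((1 / \<gamma>) *\<^sub>R (oplus u v - C))"
  unfolding Eobj_def Qf_def by simp

lemma Eobj_nm: "legendre_type \<psi> \<Longrightarrow> Eobj \<psi> \<gamma> Xh u v C \<noteq> -\<infinity>"
  unfolding Eobj_Qf by (rule Qf_nm) (auto simp: legendre_type_def)

lemma aff_u0: "c *\<^sub>R (oplus (t *\<^sub>R y + (1 - t) *\<^sub>R x) v - C) =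
   t *\<^sub>R (c *\<^sub>R (oplus y v - C)) + (1 - t) *\<^sub>R (c *\<^sub>R (oplus x v - C))"
  by (simp add: vec_eq_iff oplus_def algebra_simps)


lemma aff_v0: "c *\<^sub>R (oplus u (t *\<^sub>R y + (1 - t) *\<^sub>R x) - C) =
   t *\<^sub>R (c *\<^sub>R (oplus u y - C)) + (1 - t) *\<^sub>R (c *\<^sub>R (oplus u x - C))"
  by (simp add: vec_eq_iff oplus_def algebra_simps)


lemma aff_C0: "c *\<^sub>R (oplus u v - (t *\<^sub>R y + (1 - t) *\<^sub>R x)) =
   t *\<^sub>R (c *\<^sub>R (oplus u v - y)) + (1 - t) *\<^sub>R (c *\<^sub>R (oplus u v - x))"
  by (simp add: vec_eq_iff oplus_def algebra_simps)


lemma rconv_u: "legendre_type \<psi> \<Longrightarrow> rconv (\<lambda>x. Eobj \<psi> \<gamma> Xh x v C)"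
  unfolding Eobj_Qf by (rule rconv_comp[OF Qf_conv]) (auto simp: aff_u0)

lemma rconv_v: "legendre_type \<psi> \<Longrightarrow> rconv (\<lambda>y. Eobj \<psi> \<gamma> Xh u y C)"
  unfolding Eobj_Qf by (rule rconv_comp[OF Qf_conv]) (auto simp: aff_v0)

lemma rconv_C: "legendre_type \<psi> \<Longrightarrow> rconv (\<lambda>Z. Eobj \<psi> \<gamma> Xh u v Z)"
  unfolding Eobj_Qf by (rule rconv_comp[OF Qf_conv]) (auto simp: aff_C0)


lemma Elam_fin: "Elam \<psi> \<gamma> Xh lam R1 R2 R3 u v C = ereal a \<Longrightarrow> Eobj \<psi> \<gamma> Xh u v C \<noteq> \<infinity>"
  unfolding Elam_def by auto

lemma ublock:
  assumes L: "legendre_type \<psi>" and sc: "strongly_convex R1 \<sigma>1" and lam: "lam > 0"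
    and c1: "0 < c1" "c1 < 1" and fx: "Eobj \<psi> \<gamma> Xh x v C \<noteq> \<infinity>"
    and nb: "newton_block (\<lambda>x. Elam \<psi> \<gamma> Xh lam R1 R2 R3 x v C) \<beta> c1 x x'"
  shows "\<exists>a b. Elam \<psi> \<gamma> Xh lam R1 R2 R3 x v C = ereal a \<and> Elam \<psi> \<gamma> Xh lam R1 R2 R3 x' v C = ereal b \<and>
     a - b \<ge> c1 * (lam * \<sigma>1) / (2 * (1 - c1)) * (norm (x' - x))^2"
proof -
  obtain g where g: "((\<lambda>y. real_of_ereal (Elam \<psi> \<gamma> Xh lam R1 R2 R3 y v C)) has_derivative (\<lambda>h. g \<bullet> h)) (at x)"
    "Elam \<psi> \<gamma> Xh lam R1 R2 R3 x' v C \<le> Elam \<psi> \<gamma> Xh lam R1 R2 R3 x v C + ereal (c1 * (g \<bullet> (x' - x)))"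
    using newton_unpack[OF nb] by blast
  have sc': "strongly_convex (\<lambda>x. lam * (R1 x + R2 v + R3 C)) (lam * \<sigma>1)"
    by (rule sc_scale[OF sc lam, where c = "lam * (R2 v + R3 C)"]) (simp add: algebra_simps)
  show ?thesis
    by (rule block[OF rconv_u[OF L] _ sc' _ c1 fx g]) (auto simp: Eobj_nm[OF L] Elam_def)
qed

lemma vblock:
  assumes L: "legendre_type \<psi>" and sc: "strongly_convex R2 \<sigma>2" and lam: "lam > 0"
    and c1: "0 < c1" "c1 < 1" and fx: "Eobj \<psi> \<gamma> Xh u x C \<noteq> \<infinity>"
    and nb: "newton_block (\<lambda>y. Elam \<psi> \<gamma> Xh lam R1 R2 R3 u y C) \<beta> c1 x x'"
  shows "\<exists>a b. Elam \<psi> \<gamma> Xh lam R1 R2 R3 u x C = ereal a \<and> Elam \<psi> \<gamma> Xh lam R1 R2 R3 u x' C = ereal b \<and>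
     a - b \<ge> c1 * (lam * \<sigma>2) / (2 * (1 - c1)) * (norm (x' - x))^2"
proof -
  obtain g where g: "((\<lambda>y. real_of_ereal (Elam \<psi> \<gamma> Xh lam R1 R2 R3 u y C)) has_derivative (\<lambda>h. g \<bullet> h)) (at x)"
    "Elam \<psi> \<gamma> Xh lam R1 R2 R3 u x' C \<le> Elam \<psi> \<gamma> Xh lam R1 R2 R3 u x C + ereal (c1 * (g \<bullet> (x' - x)))"
    using newton_unpack[OF nb] by blast
  have sc': "strongly_convex (\<lambda>y. lam * (R1 u + R2 y + R3 C)) (lam * \<sigma>2)"
    by (rule sc_scale[OF sc lam, where c = "lam * (R1 u + R3 C)"]) (simp add: algebra_simps)
  show ?thesis
    by (rule block[OF rconv_v[OF L] _ sc' _ c1 fx g]) (auto simp: Eobj_nm[OF L] Elam_def)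
qed

lemma Cblock:
  assumes L: "legendre_type \<psi>" and sc: "strongly_convex R3 \<sigma>3" and lam: "lam > 0"
    and c1: "0 < c1" "c1 < 1" and fx: "Eobj \<psi> \<gamma> Xh u v x \<noteq> \<infinity>"
    and nb: "proj_block S (\<lambda>Z. Elam \<psi> \<gamma> Xh lam R1 R2 R3 u v Z) \<beta> c1 x x'"
  shows "\<exists>a b. Elam \<psi> \<gamma> Xh lam R1 R2 R3 u v x = ereal a \<and> Elam \<psi> \<gamma> Xh lam R1 R2 R3 u v x' = ereal b \<and>
     a - b \<ge> c1 * (lam * \<sigma>3) / (2 * (1 - c1)) * (norm (x' - x))^2"
proof -
  obtain g where g: "((\<lambda>y. real_of_ereal (Elam \<psi> \<gamma> Xh lam R1 R2 R3 u v y)) has_derivative (\<lambda>h. g \<bullet> h)) (at x)"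
    "Elam \<psi> \<gamma> Xh lam R1 R2 R3 u v x' \<le> Elam \<psi> \<gamma> Xh lam R1 R2 R3 u v x + ereal (c1 * (g \<bullet> (x' - x)))"
    using proj_unpack[OF nb] by blast
  have sc': "strongly_convex (\<lambda>Z. lam * (R1 u + R2 v + R3 Z)) (lam * \<sigma>3)"
    by (rule sc_scale[OF sc lam, where c = "lam * (R1 u + R2 v)"]) (simp add: algebra_simps)
  show ?thesis
    by (rule block[OF rconv_C[OF L] _ sc' _ c1 fx g]) (auto simp: Eobj_nm[OF L] Elam_def)
qed

lemma norm3: "(norm ((a::'a::real_inner, b::'b::real_inner, c::'c::real_inner) - (a', b', c')))^2
   = (norm (a - a'))^2 + (norm (b - b'))^2 + (norm (c - c'))^2"
  by (simp add: norm_Pair)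

theorem lemma1:
  fixes \<psi> :: "real \<Rightarrow> ereal"
    and Xh :: "real^'n^'n" and \<mu> \<nu> :: "real^'n"
    and R1 R2 :: "real^'n \<Rightarrow> real" and R3 :: "real^'n^'n \<Rightarrow> real"
    and \<sigma>1 \<sigma>2 \<sigma>3 \<gamma> lam \<beta> c1 :: real
    and S :: "(real^'n^'n) set"
    and u v :: "nat \<Rightarrow> real^'n" and C :: "nat \<Rightarrow> real^'n^'n"
  assumes Xh_nonneg: "\<forall>i j. 0 \<le> Xh $ i $ j"
    and Xh_rows: "\<forall>i. (\<Sum>j\<in>UNIV. Xh $ i $ j) = \<mu> $ i"
    and Xh_cols: "\<forall>j. (\<Sum>i\<in>UNIV. Xh $ i $ j) = \<nu> $ j"
    and mu_prob: "(\<forall>i. 0 \<le> \<mu> $ i) \<and> (\<Sum>i\<in>UNIV. \<mu> $ i) = 1"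
    and nu_prob: "(\<forall>j. 0 \<le> \<nu> $ j) \<and> (\<Sum>j\<in>UNIV. \<nu> $ j) = 1"
    and A1: "legendre_type \<psi>" "C2_on (interior (edom \<psi>)) (rval \<psi>)"
    and A2: "\<forall>k i j. Xh $ i $ j \<in> interior (edom \<psi>) \<and>
                     (u k $ i + v k $ j - C k $ i $ j) / \<gamma> \<in> interior (edom \<psi>)"
    and A3: "C1_grad R1" "C1_grad R2" "C1_grad R3"
            "\<sigma>1 > 0" "\<sigma>2 > 0" "\<sigma>3 > 0"
            "strongly_convex R1 \<sigma>1" "strongly_convex R2 \<sigma>2" "strongly_convex R3 \<sigma>3"
    and A4: "S \<noteq> {}" "closed S" "convex S"
    and params: "\<gamma> > 0" "lam > 0" "0 < \<beta>" "\<beta> < 1" "0 < c1" "c1 < 1 / 2"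
    and init: "C 0 \<in> S"
    and ublk: "\<forall>k. newton_block (\<lambda>x. Elam \<psi> \<gamma> Xh lam R1 R2 R3 x (v k) (C k)) \<beta> c1 (u k) (u (Suc k))"
    and vblk: "\<forall>k. newton_block (\<lambda>y. Elam \<psi> \<gamma> Xh lam R1 R2 R3 (u (Suc k)) y (C k)) \<beta> c1 (v k) (v (Suc k))"
    and Cblk: "\<forall>k. proj_block S (\<lambda>Z. Elam \<psi> \<gamma> Xh lam R1 R2 R3 (u (Suc k)) (v (Suc k)) Z) \<beta> c1 (C k) (C (Suc k))"
  shows "\<exists>w1>0. \<forall>k.
           Elam \<psi> \<gamma> Xh lam R1 R2 R3 (u k) (v k) (C k) - Elam \<psi> \<gamma> Xh lam R1 R2 R3 (u (Suc k)) (v (Suc k)) (C (Suc k))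
             \<ge> ereal (w1 * (norm ((u (Suc k), v (Suc k), C (Suc k)) - (u k, v k, C k)))\<^sup>2)"
proof -
  have c1: "0 < c1" "c1 < 1" using params by auto
  define wu where "wu = c1 * (lam * \<sigma>1) / (2 * (1 - c1))"
  define wv where "wv = c1 * (lam * \<sigma>2) / (2 * (1 - c1))"
  define wC where "wC = c1 * (lam * \<sigma>3) / (2 * (1 - c1))"
  define w1 where "w1 = min wu (min wv wC)"
  have pos: "wu > 0" "wv > 0" "wC > 0" unfolding wu_def wv_def wC_def using c1 params A3 by auto
  then have w1: "w1 > 0" unfolding w1_def by auto
  have nm: "\<forall>x. \<psi> x \<noteq> -\<infinity>" using A1 unfolding legendre_type_def by blast
  have fin0: "Eobj \<psi> \<gamma> Xh (u k) (v k) (C k) \<noteq> \<infinity>" for k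
  proof -
    have "\<psi> (((1 / \<gamma>) *\<^sub>R (oplus (u k) (v k) - C k)) $ i $ j) \<noteq> \<infinity>" for i j
    proof -
      have "((1 / \<gamma>) *\<^sub>R (oplus (u k) (v k) - C k)) $ i $ j = (u k $ i + v k $ j - C k $ i $ j) / \<gamma>"
        by (simp add: oplus_def)
      moreover have "(u k $ i + v k $ j - C k $ i $ j) / \<gamma> \<in> edom \<psi>"
        using A2 interior_subset by blast
      ultimately show ?thesis unfolding edom_def by (metis mem_Collect_eq)
    qed
    then have "psiM \<psi> ((1 / \<gamma>) *\<^sub>R (oplus (u k) (v k) - C k)) = ereal (\<Sum>i\<in>UNIV. \<Sum>j\<in>UNIV. rval \<psi> (((1 / \<gamma>) *\<^sub>R (oplus (u k) (v k) - C k)) $ i $ j))"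
      using psiM_fin[OF nm] by blast
    then show ?thesis unfolding Eobj_def by simp
  qed
  have main: "Elam \<psi> \<gamma> Xh lam R1 R2 R3 (u k) (v k) (C k) - Elam \<psi> \<gamma> Xh lam R1 R2 R3 (u (Suc k)) (v (Suc k)) (C (Suc k))
             \<ge> ereal (w1 * (norm ((u (Suc k), v (Suc k), C (Suc k)) - (u k, v k, C k)))\<^sup>2)" for k
  proof -
    obtain a0 a1 where A: "Elam \<psi> \<gamma> Xh lam R1 R2 R3 (u k) (v k) (C k) = ereal a0"
        "Elam \<psi> \<gamma> Xh lam R1 R2 R3 (u (Suc k)) (v k) (C k) = ereal a1"
        "a0 - a1 \<ge> wu * (norm (u (Suc k) - u k))^2"
      using ublock[OF A1(1) A3(7) params(2) c1 fin0 ublk[rule_format]] unfolding wu_def by blast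
    obtain b1 b2 where B: "Elam \<psi> \<gamma> Xh lam R1 R2 R3 (u (Suc k)) (v k) (C k) = ereal b1"
        "Elam \<psi> \<gamma> Xh lam R1 R2 R3 (u (Suc k)) (v (Suc k)) (C k) = ereal b2"
        "b1 - b2 \<ge> wv * (norm (v (Suc k) - v k))^2"
      using vblock[OF A1(1) A3(8) params(2) c1 Elam_fin[OF A(2)] vblk[rule_format]] unfolding wv_def by blast
    obtain d2 d3 where D: "Elam \<psi> \<gamma> Xh lam R1 R2 R3 (u (Suc k)) (v (Suc k)) (C k) = ereal d2"
        "Elam \<psi> \<gamma> Xh lam R1 R2 R3 (u (Suc k)) (v (Suc k)) (C (Suc k)) = ereal d3"
        "d2 - d3 \<ge> wC * (norm (C (Suc k) - C k))^2"
      using Cblock[OF A1(1) A3(9) params(2) c1 Elam_fin[OF B(2)] Cblk[rule_format]] unfolding wC_def by blast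
    have e: "a1 = b1" "b2 = d2" using A B D by auto
    have "w1 * (norm (u (Suc k) - u k))^2 \<le> wu * (norm (u (Suc k) - u k))^2"
      unfolding w1_def by (intro mult_right_mono) auto
    moreover have "w1 * (norm (v (Suc k) - v k))^2 \<le> wv * (norm (v (Suc k) - v k))^2"
      unfolding w1_def by (intro mult_right_mono) auto
    moreover have "w1 * (norm (C (Suc k) - C k))^2 \<le> wC * (norm (C (Suc k) - C k))^2"
      unfolding w1_def by (intro mult_right_mono) auto
    ultimately have "w1 * (norm ((u (Suc k), v (Suc k), C (Suc k)) - (u k, v k, C k)))\<^sup>2 \<le> a0 - d3"
      using A(3) B(3) D(3) e unfolding norm3 by (simp add: algebra_simps)
    then show ?thesis using A(1) D(2) by simp
  qed
  show ?thesis using w1 main by blast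
qed

end
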